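(* For every integer $n\ge1$, with the polynomial matrix $N(x)$ defined below, $\operatorname{Pf}N(x)=(-1)^{n+1}\operatorname{Pf}N(-2n-1-x)$ as polynomials in $x$.
   Context: For an indeterminate $y$ and integer $k\ge0$, $\binom yk=y(y-1)\cdots(y-k+1)/k!$. For integers $i,j\ge1$ define the polynomials $R_{i,j}(x)=\sum_{\ell=0}^{i-1}\frac{j-i}{i}\binom{j-1}{i-1-\ell}\binom{\ell+j}{\ell}\binom{2x+2n+2}{\ell+j+1}$ and $T_{i,j}(x)=\binom{2x+2n+1}{i}\big(\binom{x+n}{j}+\binom{x+n+1}{j}\big)$. $N(x)$ is the $(2n+2)\times(2n+2)$ skew-symmetric matrix with $N_{i,j}(x)=R_{i,j}(x)+T_{i,j}(x)-T_{j,i}(x)$ for $1\le i,j\le 2n$, $N_{i,2n+1}(x)=\binom{2n+2x+1}{i}-\binom{n+x}{i}-\binom{n+x+1}{i}$ and $N_{i,2n+2}(x)=\binom{x+n}{i-1}$ for $1\le i\le 2n$, and $N_{2n+1,2n+2}(x)=0$. *)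

theory Defs
  imports "HOL-Combinatorics.Combinatorics"
begin

definition pfaffian :: "nat \<Rightarrow> (nat \<Rightarrow> nat \<Rightarrow> 'a::field_char_0) \<Rightarrow> 'a" where
  "pfaffian d A =
     (\<Sum>s | s permutes {1..d}. of_int (sign s) * (\<Prod>i=1..d div 2. A (s (2*i - 1)) (s (2*i))))
     / (2 ^ (d div 2) * fact (d div 2))"

definition Rpol :: "nat \<Rightarrow> 'a::field_char_0 \<Rightarrow> nat \<Rightarrow> nat \<Rightarrow> 'a" where
  "Rpol n x i j = (\<Sum>l=0..i-1.
      (of_int (int j - int i) / of_nat i) * of_nat ((j - 1) choose (i - 1 - l))
      * of_nat ((l + j) choose l)
      * ((2*x + 2*of_nat n + 2) gchoose (l + j + 1)))"

definition Tpol :: "nat \<Rightarrow> 'a::field_char_0 \<Rightarrow> nat \<Rightarrow> nat \<Rightarrow> 'a" where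
  "Tpol n x i j = ((2*x + 2*of_nat n + 1) gchoose i)
      * (((x + of_nat n) gchoose j) + ((x + of_nat n + 1) gchoose j))"

definition Ncol :: "nat \<Rightarrow> 'a::field_char_0 \<Rightarrow> nat \<Rightarrow> 'a" where
  "Ncol n x i = ((2*of_nat n + 2*x + 1) gchoose i) - ((of_nat n + x) gchoose i)
      - ((of_nat n + x + 1) gchoose i)"

definition Nmat :: "nat \<Rightarrow> 'a::field_char_0 \<Rightarrow> nat \<Rightarrow> nat \<Rightarrow> 'a" where
  "Nmat n x i j =
    (if 1 \<le> i \<and> i \<le> 2*n \<and> 1 \<le> j \<and> j \<le> 2*n then Rpol n x i j + Tpol n x i j - Tpol n x j i
     else if 1 \<le> i \<and> i \<le> 2*n \<and> j = 2*n+1 then Ncol n x i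
     else if 1 \<le> i \<and> i \<le> 2*n \<and> j = 2*n+2 then (x + of_nat n) gchoose (i - 1)
     else if i = 2*n+1 \<and> 1 \<le> j \<and> j \<le> 2*n then - Ncol n x j
     else if i = 2*n+2 \<and> 1 \<le> j \<and> j \<le> 2*n then - ((x + of_nat n) gchoose (j - 1))
     else 0)"

end

theory Submission
  imports Defs "HOL-Computational_Algebra.Formal_Power_Series" "HOL-Computational_Algebra.Polynomial"
begin

definition Bm :: "nat \<Rightarrow> nat \<Rightarrow> 'a::field_char_0" where
  "Bm i a = (-1)^(i-1) * of_nat ((i-1) choose (a-1))"

lemma BV1:
  fixes z :: "'a::field_char_0"
  assumes "i \<ge> 1"
  shows "(\<Sum>a=1..i. Bm i a * (z gchoose (a-1))) = (-1-z) gchoose (i-1)"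
proof -
  obtain m where i: "i = Suc m" using assms by (cases i) auto
  have "(\<Sum>a=1..i. Bm i a * (z gchoose (a-1))) = (\<Sum>k=0..m. Bm i (Suc k) * (z gchoose k))"
    unfolding i by (simp only: One_nat_def sum.shift_bounds_cl_Suc_ivl; simp)
  also have "\<dots> = (-1)^m * (\<Sum>k=0..m. (z gchoose k) * (of_nat m gchoose (m - k)))"
    unfolding Bm_def i sum_distrib_left
    by (intro sum.cong refl) (auto simp: binomial_gbinomial[symmetric] binomial_symmetric[symmetric])
  also have "\<dots> = (-1)^m * ((z + of_nat m) gchoose m)"
    by (simp add: gbinomial_Vandermonde)
  also have "\<dots> = (-1-z) gchoose (i-1)"
    using gbinomial_minus[of "z+1" m] unfolding i by (simp add: algebra_simps)
  finally show ?thesis .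
qed

lemma BV2:
  fixes z :: "'a::field_char_0"
  assumes "i \<ge> 1"
  shows "(\<Sum>a=1..i. Bm i a * (z gchoose a)) = - ((-z) gchoose i)"
proof -
  obtain m where i: "i = Suc m" using assms by (cases i) auto
  have "(\<Sum>a=1..i. Bm i a * (z gchoose a)) = (\<Sum>k=0..m. Bm i (Suc k) * (z gchoose Suc k))"
    unfolding i by (simp only: One_nat_def sum.shift_bounds_cl_Suc_ivl; simp)
  also have "\<dots> = (-1)^m * (\<Sum>k=0..m. (z gchoose Suc k) * (of_nat m gchoose (Suc m - Suc k)))"
    unfolding Bm_def i sum_distrib_left
    by (intro sum.cong refl) (auto simp: binomial_gbinomial[symmetric] binomial_symmetric[symmetric])
  also have "(\<Sum>k=0..m. (z gchoose Suc k) * (of_nat m gchoose (Suc m - Suc k)))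
      = (\<Sum>k=0..Suc m. (z gchoose k) * (of_nat m gchoose (Suc m - k)))"
    by (simp only: sum.atLeast0_atMost_Suc_shift) (simp add: binomial_gbinomial[symmetric])
  also have "\<dots> = (z + of_nat m) gchoose Suc m"
    by (rule gbinomial_Vandermonde)
  also have "(-1)^m * \<dots> = - ((-z) gchoose i)"
    using gbinomial_minus[of z "Suc m"] unfolding i by (simp add: algebra_simps)
  finally show ?thesis .
qed


definition Rw :: "nat \<Rightarrow> nat \<Rightarrow> 'a::field_char_0 \<Rightarrow> 'a" where
  "Rw i j w = (\<Sum>l=0..i-1.
      (of_int (int j - int i) / of_nat i) * of_nat ((j - 1) choose (i - 1 - l))
      * of_nat ((l + j) choose l)
      * (w gchoose (l + j + 1)))"

lemma Rpol_Rw: "Rpol n x i j = Rw i j (2*x + 2*of_nat n + 2)"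
  unfolding Rpol_def Rw_def ..

lemma gch_step: "of_nat (Suc k) * ((z::'a::field_char_0) gchoose Suc k) = (z - of_nat k) * (z gchoose k)"
  using gbinomial_absorption[of k z] gbinomial_absorb_comp[of z k] by simp

lemma Rw_diff:
  fixes w :: "'a::field_char_0"
  assumes "a \<ge> 1" "b \<ge> 1"
  shows "Rw a b (w+1) - Rw a b w = (of_int (int b - int a) / of_nat a) * ((w-1) gchoose (a-1)) * (w gchoose b)"
proof -
  define c where "c = (of_int (int b - int a) / of_nat a :: 'a)"
  have "Rw a b (w+1) - Rw a b w = (\<Sum>l=0..a-1. c * of_nat ((b - 1) choose (a - 1 - l))
      * of_nat ((l + b) choose l) * (w gchoose (l + b)))"
    unfolding Rw_def c_def sum_subtractf[symmetric]
  proof (intro sum.cong refl)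
    fix l
    have eq: "((w+1) gchoose (l+b+1)) - (w gchoose (l+b+1)) = w gchoose (l+b)"
      using gbinomial_Suc_Suc[of w "l+b"] by simp
    show "of_int (int b - int a) / of_nat a * of_nat (b - 1 choose (a - 1 - l)) * of_nat (l + b choose l) *
          (w + 1 gchoose (l + b + 1)) -
          of_int (int b - int a) / of_nat a * of_nat (b - 1 choose (a - 1 - l)) * of_nat (l + b choose l) *
          (w gchoose (l + b + 1)) =
          of_int (int b - int a) / of_nat a * of_nat (b - 1 choose (a - 1 - l)) * of_nat (l + b choose l) *
          (w gchoose (l + b))"
      unfolding eq[symmetric] by (simp only: right_diff_distrib)
  qed
  also have "\<dots> = (\<Sum>l=0..a-1. c * (w gchoose b) * ((w - of_nat b) gchoose l) * (of_nat (b-1) gchoose (a - 1 - l)))"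
  proof (intro sum.cong refl)
    fix l assume "l \<in> {0..a-1}"
    have "(w gchoose (l+b)) * (of_nat (l+b) gchoose b) = (w gchoose b) * ((w - of_nat b) gchoose l)"
      using gbinomial_trinomial_revision[of b "l+b" w] by simp
    moreover have "of_nat ((l + b) choose l) = (of_nat (l+b) gchoose b :: 'a)"
      by (metis binomial_gbinomial binomial_symmetric le_add2 add_diff_cancel_right')
    ultimately show "c * of_nat ((b - 1) choose (a - 1 - l)) * of_nat ((l + b) choose l) * (w gchoose (l + b))
       = c * (w gchoose b) * ((w - of_nat b) gchoose l) * (of_nat (b-1) gchoose (a - 1 - l))"
      by (simp add: binomial_gbinomial algebra_simps)
  qed
  also have "\<dots> = c * (w gchoose b) * (\<Sum>l=0..a-1. ((w - of_nat b) gchoose l) * (of_nat (b-1) gchoose (a - 1 - l)))"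
    by (simp add: sum_distrib_left mult.assoc)
  also have "(\<Sum>l=0..a-1. ((w - of_nat b) gchoose l) * (of_nat (b-1) gchoose (a - 1 - l))) = (w - 1) gchoose (a-1)"
    using gbinomial_Vandermonde[of "w - of_nat b" "of_nat (b-1)" "a-1"] assms by (simp add: of_nat_diff)
  finally show ?thesis unfolding c_def by (simp add: algebra_simps)
qed

definition Ew :: "nat \<Rightarrow> nat \<Rightarrow> 'a::field_char_0 \<Rightarrow> 'a" where
  "Ew a b z = (z gchoose a) * (z gchoose (b-1)) - (z gchoose b) * (z gchoose (a-1))"

lemma Ew_alt:
  fixes z :: "'a::field_char_0"
  assumes "a \<ge> 1" "b \<ge> 1"
  shows "(of_int (int b - int a) / of_nat a) * (z gchoose (a-1)) * ((z+1) gchoose b) = Ew a b z"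
proof -
  obtain a' where a: "a = Suc a'" using assms by (cases a) auto
  obtain b' where b: "b = Suc b'" using assms by (cases b) auto
  have 1: "of_nat a * (z gchoose a) = (z - of_nat a') * (z gchoose a')" unfolding a by (rule gch_step)
  have 2: "of_nat b * (z gchoose b) = (z - of_nat b') * (z gchoose b')" unfolding b by (rule gch_step)
  have 3: "of_nat b * ((z+1) gchoose b) = (z + 1) * (z gchoose b')"
    unfolding b using gbinomial_absorption[of b' "z+1"] by simp
  have "of_nat a * of_nat b * ((of_int (int b - int a) / of_nat a) * (z gchoose (a-1)) * ((z+1) gchoose b))
      = of_nat a * of_nat b * Ew a b z"
  proof -
    have "of_nat a * of_nat b * ((of_int (int b - int a) / of_nat a) * (z gchoose (a-1)) * ((z+1) gchoose b))
        = (of_nat b - of_nat a) * (z gchoose a') * (of_nat b * ((z+1) gchoose b))"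
    proof -
      have "(of_int (int b - int a)::'a) = of_nat b - of_nat a" by simp
      moreover have "a - 1 = a'" using a by simp
      moreover have "(of_nat a::'a) \<noteq> 0" using assms by simp
      ultimately show ?thesis by (simp add: field_simps)
    qed
    also have "\<dots> = (of_nat b - of_nat a) * (z gchoose a') * ((z + 1) * (z gchoose b'))" by (simp only: 3)
    also have "\<dots> = of_nat b * (of_nat a * (z gchoose a)) * (z gchoose b') - of_nat a * (of_nat b * (z gchoose b)) * (z gchoose a')"
      unfolding 1 2 by (simp add: a b algebra_simps)
    also have "\<dots> = of_nat a * of_nat b * Ew a b z" unfolding Ew_def by (simp add: a b algebra_simps)
    finally show ?thesis .
  qed
  moreover have "of_nat a * of_nat b \<noteq> (0::'a)" using assms by simp
  ultimately show ?thesis using mult_left_cancel by blast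
qed

lemma Rw_diff_E:
  fixes w :: "'a::field_char_0"
  assumes "a \<ge> 1" "b \<ge> 1"
  shows "Rw a b (w+1) - Rw a b w = Ew a b (w-1)"
  using Rw_diff[OF assms, of w] Ew_alt[OF assms, of "w-1"] by simp


definition ispoly :: "('a::field_char_0 \<Rightarrow> 'a) \<Rightarrow> bool" where
  "ispoly f \<longleftrightarrow> (\<exists>p. \<forall>w. f w = poly p w)"

lemma ispoly_const: "ispoly (\<lambda>w. c)"
  unfolding ispoly_def by (rule exI[of _ "[:c:]"]) simp

lemma ispoly_id: "ispoly (\<lambda>w. w)"
  unfolding ispoly_def by (rule exI[of _ "[:0,1:]"]) simp

lemma ispoly_add: "ispoly f \<Longrightarrow> ispoly g \<Longrightarrow> ispoly (\<lambda>w. f w + g w)"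
  unfolding ispoly_def by (metis poly_add)

lemma ispoly_diff: "ispoly f \<Longrightarrow> ispoly g \<Longrightarrow> ispoly (\<lambda>w. f w - g w)"
  unfolding ispoly_def by (metis poly_diff)

lemma ispoly_mult: "ispoly f \<Longrightarrow> ispoly g \<Longrightarrow> ispoly (\<lambda>w. f w * g w)"
  unfolding ispoly_def by (metis poly_mult)

lemma ispoly_sum: "finite A \<Longrightarrow> (\<And>a. a \<in> A \<Longrightarrow> ispoly (f a)) \<Longrightarrow> ispoly (\<lambda>w. \<Sum>a\<in>A. f a w)"
  by (induction A rule: finite_induct) (auto intro: ispoly_add ispoly_const)

lemma ispoly_prod: "finite A \<Longrightarrow> (\<And>a. a \<in> A \<Longrightarrow> ispoly (f a)) \<Longrightarrow> ispoly (\<lambda>w. \<Prod>a\<in>A. f a w)"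
  by (induction A rule: finite_induct) (auto intro: ispoly_mult ispoly_const)

lemma ispoly_gch: "ispoly (\<lambda>w. w gchoose k)"
proof -
  have "(\<lambda>w::'a. w gchoose k) = (\<lambda>w. (\<Prod>i=0..<k. w - of_nat i) * (1 / fact k))"
    by (rule ext) (metis gbinomial_mult_fact' fact_nonzero nonzero_mult_div_cancel_right times_divide_eq_right mult_1_right)
  moreover have "ispoly (\<lambda>w::'a. (\<Prod>i=0..<k. w - of_nat i) * (1 / fact k))"
    by (intro ispoly_mult ispoly_prod ispoly_diff ispoly_id ispoly_const) auto
  ultimately show ?thesis by simp
qed

lemma ispoly_refl: "ispoly f \<Longrightarrow> ispoly (\<lambda>w. f (c - w))"
  unfolding ispoly_def
proof (elim exE)
  fix p assume "\<forall>w. f w = poly p w"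
  then show "\<exists>q. \<forall>w. f (c - w) = poly q w"
    by (intro exI[of _ "pcompose p [:c, -1:]"]) (simp add: poly_pcompose)
qed

lemma ispoly_zero:
  fixes f :: "'a::field_char_0 \<Rightarrow> 'a"
  assumes "ispoly f" "\<And>k. f (of_nat k + 1) = 0"
  shows "f w = 0"
proof -
  obtain p where p: "\<And>w. f w = poly p w" using assms(1) unfolding ispoly_def by blast
  have "p = 0"
  proof (rule ccontr)
    assume "p \<noteq> 0"
    then have "finite {x. poly p x = 0}" by (rule poly_roots_finite)
    moreover have "range (\<lambda>k::nat. of_nat k + (1::'a)) \<subseteq> {x. poly p x = 0}"
      using assms(2) p by auto
    moreover have "inj (\<lambda>k::nat. of_nat k + (1::'a))" by (auto intro: injI)
    ultimately show False using finite_imageD finite_subset infinite_UNIV_nat by metis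
  qed
  then show ?thesis using p by simp
qed

lemma ispoly_Rw: "ispoly (Rw a b)"
  unfolding Rw_def by (intro ispoly_sum ispoly_mult ispoly_const ispoly_gch) auto

lemma one_gch: assumes "k \<ge> 2" shows "(1::'a::field_char_0) gchoose k = 0"
proof -
  have "(1::nat) choose k = 0" using assms by (intro binomial_eq_0) simp
  then show ?thesis using binomial_gbinomial[of 1 k, where 'a='a] by (metis of_nat_0 of_nat_1)
qed

lemma Rw_one: "b \<ge> 1 \<Longrightarrow> Rw a b (1::'a::field_char_0) = 0"
  unfolding Rw_def by (intro sum.neutral) (auto simp: one_gch)

lemma sum_split4:
  fixes f g p q r s :: "nat \<Rightarrow> 'a::comm_ring_1"
  shows "(\<Sum>a\<in>A. \<Sum>b\<in>B. f a * g b * (p a * q b - r b * s a))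
       = (\<Sum>a\<in>A. f a * p a) * (\<Sum>b\<in>B. g b * q b) - (\<Sum>b\<in>B. g b * r b) * (\<Sum>a\<in>A. f a * s a)"
  by (simp add: sum_product sum_subtractf right_diff_distrib sum.swap[of _ A B] algebra_simps)

lemma sum_Ew:
  fixes z :: "'a::field_char_0"
  assumes "i \<ge> 1" "j \<ge> 1"
  shows "(\<Sum>a=1..i. \<Sum>b=1..j. Bm i a * Bm j b * Ew a b z)
     = (-((-z) gchoose i)) * ((-1-z) gchoose (j-1)) - (-((-z) gchoose j)) * ((-1-z) gchoose (i-1))"
  unfolding Ew_def sum_split4 BV1[OF assms(1)] BV1[OF assms(2)] BV2[OF assms(1)] BV2[OF assms(2)] ..

lemma R_inv:
  fixes w :: "'a::field_char_0"
  assumes "i \<ge> 1" "j \<ge> 1"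
  shows "(\<Sum>a=1..i. \<Sum>b=1..j. Bm i a * Bm j b * Rw a b w) = Rw i j (2 - w)"
proof -
  define K where "K w = (\<Sum>a=1..i. \<Sum>b=1..j. Bm i a * Bm j b * Rw a b w) - Rw i j (2 - w)" for w :: 'a
  have step: "K (w+1) = K w" for w
  proof -
    have "(\<Sum>a=1..i. \<Sum>b=1..j. Bm i a * Bm j b * Rw a b (w+1)) - (\<Sum>a=1..i. \<Sum>b=1..j. Bm i a * Bm j b * Rw a b w)
        = (\<Sum>a=1..i. \<Sum>b=1..j. Bm i a * Bm j b * Ew a b (w-1))"
      unfolding sum_subtractf[symmetric] right_diff_distrib[symmetric]
      by (intro sum.cong refl) (simp add: Rw_diff_E)
    also have "\<dots> = (-((1-w) gchoose i)) * ((-w) gchoose (j-1)) - (-((1-w) gchoose j)) * ((-w) gchoose (i-1))"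
      unfolding sum_Ew[OF assms] by simp
    finally have 1: "(\<Sum>a=1..i. \<Sum>b=1..j. Bm i a * Bm j b * Rw a b (w+1)) - (\<Sum>a=1..i. \<Sum>b=1..j. Bm i a * Bm j b * Rw a b w)
        = (-((1-w) gchoose i)) * ((-w) gchoose (j-1)) - (-((1-w) gchoose j)) * ((-w) gchoose (i-1))" .
    have 2: "Rw i j (2 - w) - Rw i j (2 - (w+1)) = Ew i j (-w)"
      using Rw_diff_E[OF assms, of "1-w"] by (simp add: algebra_simps)
    have pi: "(1-w) gchoose i = ((-w) gchoose i) + ((-w) gchoose (i-1))"
      using gbinomial_Suc_Suc[of "-w" "i-1"] assms by (simp add: algebra_simps)
    have pj: "(1-w) gchoose j = ((-w) gchoose j) + ((-w) gchoose (j-1))"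
      using gbinomial_Suc_Suc[of "-w" "j-1"] assms by (simp add: algebra_simps)
    have "K (w+1) - K w = ((\<Sum>a=1..i. \<Sum>b=1..j. Bm i a * Bm j b * Rw a b (w+1)) - (\<Sum>a=1..i. \<Sum>b=1..j. Bm i a * Bm j b * Rw a b w))
        + (Rw i j (2 - w) - Rw i j (2 - (w+1)))" unfolding K_def by (simp add: algebra_simps)
    also have "\<dots> = (-((1-w) gchoose i)) * ((-w) gchoose (j-1)) - (-((1-w) gchoose j)) * ((-w) gchoose (i-1)) + Ew i j (-w)"
      unfolding 1 2 ..
    also have "\<dots> = 0" unfolding Ew_def pi pj by (simp add: algebra_simps)
    finally show ?thesis by simp
  qed
  have "ispoly K" unfolding K_def
    by (intro ispoly_diff ispoly_sum ispoly_mult ispoly_const ispoly_Rw ispoly_refl[OF ispoly_Rw]) auto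
  moreover have "K (of_nat k + 1) = 0" for k
  proof (induction k)
    case 0
    have "(\<Sum>a=1..i. \<Sum>b=1..j. Bm i a * Bm j b * Rw a b (1::'a)) = 0"
      by (intro sum.neutral ballI) (simp add: Rw_one)
    moreover have "(2::'a) - 1 = 1" by simp
    ultimately show ?case unfolding K_def using assms Rw_one[of j i] by simp
  next
    case (Suc k) then show ?case using step[of "of_nat k + 1"] by (simp add: add.commute add.left_commute)
  qed
  ultimately have "K w = 0" by (rule ispoly_zero)
  then show ?thesis unfolding K_def by simp
qed


lemma prod_pairs: "(\<Prod>i=1..(m::nat). f (2*i-1) * f (2*i)) = (\<Prod>p=1..2*m. (f p :: 'a::comm_monoid_mult))"
proof (induction m)
  case 0 then show ?case by simp
next
  case (Suc m)
  have "(\<Prod>p=1..2*Suc m. f p) = f (Suc (Suc (2*m))) * (f (Suc (2*m)) * (\<Prod>p=1..2*m. f p))"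
    by (simp add: prod.nat_ivl_Suc' mult_ac)
  then show ?case using Suc by (simp add: prod.nat_ivl_Suc' mult_ac)
qed

definition hpos :: "(nat \<Rightarrow> nat \<times> nat) \<Rightarrow> nat \<Rightarrow> nat" where
  "hpos g p = (if even p then snd (g (p div 2)) else fst (g (Suc p div 2)))"

lemma hpos_odd: "i \<ge> 1 \<Longrightarrow> hpos g (2*i - 1) = fst (g i)"
  unfolding hpos_def by (cases i) auto

lemma hpos_even: "hpos g (2*i) = snd (g i)"
  unfolding hpos_def by simp

definition detM :: "(nat \<Rightarrow> nat \<Rightarrow> 'a::comm_ring_1) \<Rightarrow> nat set \<Rightarrow> 'a" where
  "detM M D = (\<Sum>s | s permutes D. of_int (sign s) * (\<Prod>p\<in>D. M (s p) p))"

lemma Delta_zero: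
  fixes M :: "nat \<Rightarrow> nat \<Rightarrow> 'a::field_char_0"
  assumes fin: "finite D" and pq: "p \<in> D" "q \<in> D" "p \<noteq> q" and h: "h p = h q"
  shows "(\<Sum>s | s permutes D. of_int (sign s) * (\<Prod>r\<in>D. M (s r) (h r))) = 0"
proof -
  let ?F = "\<lambda>s. of_int (sign s) * (\<Prod>r\<in>D. M (s r) (h r)) :: 'a"
  let ?t = "transpose p q"
  have tp: "?t permutes D" by (rule permutes_swap_id[OF pq(1,2)])
  have "(\<Sum>s | s permutes D. ?F s) = (\<Sum>s | s permutes D. ?F (s \<circ> ?t))"
    by (rule sum_permutations_compose_right[OF tp])
  also have "\<dots> = (\<Sum>s | s permutes D. - ?F s)"
  proof (intro sum.cong refl)
    fix s assume "s \<in> {s. s permutes D}"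
    then have s: "s permutes D" by simp
    have sg: "sign (s \<circ> ?t) = - sign s"
      using sign_compose[of s ?t] sign_swap_id[of p q] pq fin s tp
      by (auto simp: permutation_permutes)
    have bt: "bij_betw ?t D D" using tp by (rule permutes_imp_bij)
    have "(\<Prod>r\<in>D. M ((s \<circ> ?t) r) (h r)) = (\<Prod>r\<in>D. M (s (?t r)) (h (?t (?t r))))" by simp
    also have "\<dots> = (\<Prod>r\<in>D. M (s r) (h (?t r)))"
      using prod.reindex_bij_betw[OF bt, of "\<lambda>r. M (s r) (h (?t r))"] by simp
    also have "\<dots> = (\<Prod>r\<in>D. M (s r) (h r))"
      by (intro prod.cong refl) (auto simp: transpose_def h)
    finally show "?F (s \<circ> ?t) = - ?F s" using sg by simp
  qed
  also have "\<dots> = - (\<Sum>s | s permutes D. ?F s)" by (simp add: sum_negf)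
  finally show ?thesis by simp
qed

lemma Delta_perm:
  fixes M :: "nat \<Rightarrow> nat \<Rightarrow> 'a::field_char_0"
  assumes fin: "finite D" and t: "t permutes D"
  shows "(\<Sum>s | s permutes D. of_int (sign s) * (\<Prod>r\<in>D. M (s r) (t r))) = of_int (sign t) * detM M D"
proof -
  let ?F = "\<lambda>s. of_int (sign s) * (\<Prod>r\<in>D. M (s r) (t r)) :: 'a"
  have "(\<Sum>s | s permutes D. ?F s) = (\<Sum>s | s permutes D. ?F (s \<circ> t))"
    by (rule sum_permutations_compose_right[OF t])
  also have "\<dots> = (\<Sum>s | s permutes D. of_int (sign t) * (of_int (sign s) * (\<Prod>p\<in>D. M (s p) p)))"
  proof (intro sum.cong refl)
    fix s assume "s \<in> {s. s permutes D}"
    then have s: "s permutes D" by simp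
    have sg: "sign (s \<circ> t) = sign s * sign t"
      using sign_compose[of s t] fin s t by (auto simp: permutation_permutes)
    have bt: "bij_betw t D D" using t by (rule permutes_imp_bij)
    have "(\<Prod>r\<in>D. M ((s \<circ> t) r) (t r)) = (\<Prod>p\<in>D. M (s p) p)"
      using prod.reindex_bij_betw[OF bt, of "\<lambda>p. M (s p) p"] by simp
    then show "?F (s \<circ> t) = of_int (sign t) * (of_int (sign s) * (\<Prod>p\<in>D. M (s p) p))"
      using sg by (simp add: mult_ac)
  qed
  also have "\<dots> = of_int (sign t) * detM M D" unfolding detM_def by (simp add: sum_distrib_left)
  finally show ?thesis .
qed


lemma numer_transform:
  fixes A M :: "nat \<Rightarrow> nat \<Rightarrow> 'a::field_char_0"
  shows "(\<Sum>s | s permutes {1..2*m}. of_int (sign s) * (\<Prod>i=1..m.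
            (\<Sum>a\<in>{1..2*m}. \<Sum>b\<in>{1..2*m}. M (s (2*i-1)) a * A a b * M (s (2*i)) b)))
       = detM M {1..2*m} * (\<Sum>t | t permutes {1..2*m}. of_int (sign t) * (\<Prod>i=1..m. A (t (2*i-1)) (t (2*i))))"
proof -
  define D where "D = {1..2*m}"
  define P where "P = {1..m}"
  define G where "G = PiE P (\<lambda>_. D \<times> D)"
  define G' where "G' = {g\<in>G. inj_on (hpos g) D}"
  define tg where "tg g = (\<lambda>p. if p \<in> D then hpos g p else p)" for g
  define gt where "gt t = restrict (\<lambda>i. (t (2*i-1), t (2*i))) P" for t :: "nat \<Rightarrow> nat"
  have finD: "finite D" and finP: "finite P" and finG: "finite G"
    unfolding D_def P_def G_def by (auto intro!: finite_PiE)
  have memD: "p \<in> D \<Longrightarrow> (if even p then p div 2 else Suc p div 2) \<in> P" for p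
    unfolding D_def P_def by (auto elim!: oddE)
  have memD1: "i \<in> P \<Longrightarrow> 2*i-1 \<in> D" "i \<in> P \<Longrightarrow> 2*i \<in> D" for i
    unfolding D_def P_def by auto
  define Phi where "Phi s g = (\<Prod>r\<in>D. M (s r) (hpos g r))" for s g
  define AP where "AP g = (\<Prod>i\<in>P. A (fst (g i)) (snd (g i)))" for g
  have expand: "(\<Prod>i\<in>P. (\<Sum>a\<in>D. \<Sum>b\<in>D. M (s (2*i-1)) a * A a b * M (s (2*i)) b))
      = (\<Sum>g\<in>G. AP g * Phi s g)" for s
  proof -
    have "(\<Prod>i\<in>P. (\<Sum>a\<in>D. \<Sum>b\<in>D. M (s (2*i-1)) a * A a b * M (s (2*i)) b))
        = (\<Prod>i\<in>P. (\<Sum>ab\<in>D\<times>D. M (s (2*i-1)) (fst ab) * A (fst ab) (snd ab) * M (s (2*i)) (snd ab)))"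
      by (simp add: sum.cartesian_product case_prod_beta)
    also have "\<dots> = (\<Sum>g\<in>G. \<Prod>i\<in>P. M (s (2*i-1)) (fst (g i)) * A (fst (g i)) (snd (g i)) * M (s (2*i)) (snd (g i)))"
      unfolding G_def by (rule prod_sum_PiE) (auto simp: finP finD)
    also have "\<dots> = (\<Sum>g\<in>G. AP g * Phi s g)"
    proof (intro sum.cong refl)
      fix g
      have "(\<Prod>i\<in>P. M (s (2*i-1)) (fst (g i)) * A (fst (g i)) (snd (g i)) * M (s (2*i)) (snd (g i)))
          = AP g * (\<Prod>i\<in>P. M (s (2*i-1)) (hpos g (2*i-1)) * M (s (2*i)) (hpos g (2*i)))"
        unfolding AP_def prod.distrib[symmetric]
      proof (intro prod.cong refl)
        fix i assume "i \<in> P"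
        then have i1: "i \<ge> 1" unfolding P_def by simp
        show "M (s (2*i-1)) (fst (g i)) * A (fst (g i)) (snd (g i)) * M (s (2*i)) (snd (g i))
          = A (fst (g i)) (snd (g i)) * (M (s (2*i-1)) (hpos g (2*i-1)) * M (s (2*i)) (hpos g (2*i)))"
          unfolding hpos_odd[OF i1] hpos_even by (simp add: mult_ac)
      qed
      also have "(\<Prod>i\<in>P. M (s (2*i-1)) (hpos g (2*i-1)) * M (s (2*i)) (hpos g (2*i))) = Phi s g"
        unfolding Phi_def P_def D_def by (rule prod_pairs[of "\<lambda>r. M (s r) (hpos g r)"])
      finally show "(\<Prod>i\<in>P. M (s (2*i-1)) (fst (g i)) * A (fst (g i)) (snd (g i)) * M (s (2*i)) (snd (g i)))
          = AP g * Phi s g" .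
    qed
    finally show ?thesis .
  qed
  have "(\<Sum>s | s permutes D. of_int (sign s) * (\<Prod>i\<in>P.
            (\<Sum>a\<in>D. \<Sum>b\<in>D. M (s (2*i-1)) a * A a b * M (s (2*i)) b)))
      = (\<Sum>s | s permutes D. \<Sum>g\<in>G. AP g * (of_int (sign s) * Phi s g))"
    unfolding expand by (simp add: sum_distrib_left mult_ac)
  also have "\<dots> = (\<Sum>g\<in>G. AP g * (\<Sum>s | s permutes D. of_int (sign s) * Phi s g))"
    by (subst sum.swap) (simp add: sum_distrib_left)
  also have "\<dots> = (\<Sum>g\<in>G'. AP g * (\<Sum>s | s permutes D. of_int (sign s) * Phi s g))"
  proof (rule sum.mono_neutral_right[OF finG])
    show "G' \<subseteq> G" unfolding G'_def by auto
    show "\<forall>g\<in>G - G'. AP g * (\<Sum>s | s permutes D. of_int (sign s) * Phi s g) = 0"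
    proof
      fix g assume "g \<in> G - G'"
      then obtain p q where pq: "p \<in> D" "q \<in> D" "p \<noteq> q" "hpos g p = hpos g q"
        unfolding G'_def inj_on_def by auto
      show "AP g * (\<Sum>s | s permutes D. of_int (sign s) * Phi s g) = 0"
        unfolding Phi_def using Delta_zero[OF finD pq(1) pq(2) pq(3), of "hpos g" M] pq(4) by simp
    qed
  qed
  also have "\<dots> = (\<Sum>g\<in>G'. detM M D * (of_int (sign (tg g)) * (\<Prod>i\<in>P. A (tg g (2*i-1)) (tg g (2*i)))))"
  proof (intro sum.cong refl)
    fix g assume g: "g \<in> G'"
    have hD: "hpos g p \<in> D" if "p \<in> D" for p
    proof -
      have "g (if even p then p div 2 else Suc p div 2) \<in> D \<times> D"
        using g memD[OF that] PiE_mem[of g P "\<lambda>_. D\<times>D"] unfolding G'_def G_def by blast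
      then show ?thesis unfolding hpos_def by (auto split: if_splits)
    qed
    have inj: "inj_on (hpos g) D" using g unfolding G'_def by auto
    have img: "hpos g ` D = D" using endo_inj_surj[OF finD _ inj] hD by auto
    have tperm: "tg g permutes D"
    proof (rule bij_imp_permutes)
      show "bij_betw (tg g) D D"
        using inj img unfolding bij_betw_def tg_def inj_on_def by (auto simp: image_def)
      show "x \<notin> D \<Longrightarrow> tg g x = x" for x unfolding tg_def by simp
    qed
    have "(\<Sum>s | s permutes D. of_int (sign s) * Phi s g)
        = (\<Sum>s | s permutes D. of_int (sign s) * (\<Prod>r\<in>D. M (s r) (tg g r)))"
      unfolding Phi_def tg_def by (intro sum.cong refl arg_cong2[where f="(*)"] prod.cong) auto
    also have "\<dots> = of_int (sign (tg g)) * detM M D" by (rule Delta_perm[OF finD tperm])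
    finally have 1: "(\<Sum>s | s permutes D. of_int (sign s) * Phi s g) = of_int (sign (tg g)) * detM M D" .
    have 2: "AP g = (\<Prod>i\<in>P. A (tg g (2*i-1)) (tg g (2*i)))"
      unfolding AP_def tg_def
    proof (intro prod.cong refl)
      fix i assume iP: "i \<in> P"
      then have i1: "i \<ge> 1" unfolding P_def by simp
      show "A (fst (g i)) (snd (g i)) = A (if 2*i-1 \<in> D then hpos g (2*i-1) else 2*i-1) (if 2*i \<in> D then hpos g (2*i) else 2*i)"
        using memD1[OF iP] unfolding hpos_odd[OF i1] hpos_even by simp
    qed
    show "AP g * (\<Sum>s | s permutes D. of_int (sign s) * Phi s g)
        = detM M D * (of_int (sign (tg g)) * (\<Prod>i\<in>P. A (tg g (2*i-1)) (tg g (2*i))))"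
      unfolding 1 2 by (simp add: mult_ac)
  qed
  also have "\<dots> = detM M D * (\<Sum>g\<in>G'. of_int (sign (tg g)) * (\<Prod>i\<in>P. A (tg g (2*i-1)) (tg g (2*i))))"
    by (simp add: sum_distrib_left)
  also have "(\<Sum>g\<in>G'. of_int (sign (tg g)) * (\<Prod>i\<in>P. A (tg g (2*i-1)) (tg g (2*i))))
      = (\<Sum>t | t permutes D. of_int (sign t) * (\<Prod>i\<in>P. A (t (2*i-1)) (t (2*i))))"
  proof (rule sum.reindex_bij_witness[where j = tg and i = gt])
    fix g assume g: "g \<in> G'"
    show "gt (tg g) = g"
    proof
      fix i
      show "gt (tg g) i = g i"
      proof (cases "i \<in> P")
        case True
        then have "i \<ge> 1" unfolding P_def by simp
        then show ?thesis using True memD1[OF True] hpos_odd[of i g] unfolding gt_def tg_def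
          by (simp add: hpos_even)
      next
        case False
        then show ?thesis using g unfolding gt_def G'_def G_def by (auto simp: PiE_def extensional_def)
      qed
    qed
    have hD: "hpos g p \<in> D" if "p \<in> D" for p
    proof -
      have "g (if even p then p div 2 else Suc p div 2) \<in> D \<times> D"
        using g memD[OF that] PiE_mem[of g P "\<lambda>_. D\<times>D"] unfolding G'_def G_def by blast
      then show ?thesis unfolding hpos_def by (auto split: if_splits)
    qed
    have inj: "inj_on (hpos g) D" using g unfolding G'_def by auto
    have img: "hpos g ` D = D" using endo_inj_surj[OF finD _ inj] hD by auto
    show "tg g \<in> {t. t permutes D}"
    proof (simp, rule bij_imp_permutes)
      show "bij_betw (tg g) D D"
        using inj img unfolding bij_betw_def tg_def inj_on_def by (auto simp: image_def)
      show "x \<notin> D \<Longrightarrow> tg g x = x" for x unfolding tg_def by simp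
    qed
  next
    fix t assume "t \<in> {t. t permutes D}"
    then have t: "t permutes D" by simp
    have ht: "hpos (gt t) p = t p" if "p \<in> D" for p
    proof (cases "even p")
      case True
      then obtain i where i: "p = 2*i" by blast
      then have "i \<in> P" using that unfolding D_def P_def by auto
      then show ?thesis unfolding hpos_def gt_def using i by simp
    next
      case False
      then obtain i where i: "p = 2*i+1" using oddE by blast
      then have "Suc i \<in> P" using that unfolding D_def P_def by auto
      then show ?thesis unfolding hpos_def gt_def using i by simp
    qed
    show "tg (gt t) = t"
    proof
      fix p show "tg (gt t) p = t p"
        unfolding tg_def using ht permutes_not_in[OF t] by auto
    qed
    have tD: "t p \<in> D" if "p \<in> D" for p using t that by (simp add: permutes_in_image)
    show "gt t \<in> G'"
      unfolding G'_def G_def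
    proof (intro CollectI conjI)
      show "gt t \<in> PiE P (\<lambda>_. D \<times> D)"
        unfolding gt_def using tD memD1 by auto
      show "inj_on (hpos (gt t)) D"
        using inj_on_cong[of D "hpos (gt t)" t] ht permutes_inj_on[OF t] by simp
    qed
  next
    fix g assume "g \<in> G'"
    show "of_int (sign (tg g)) * (\<Prod>i\<in>P. A (tg g (2*i-1)) (tg g (2*i)))
        = of_int (sign (tg g)) * (\<Prod>i\<in>P. A (tg g (2*i-1)) (tg g (2*i)))" ..
  qed
  finally show ?thesis unfolding D_def P_def .
qed


lemma pf_transform:
  fixes A M :: "nat \<Rightarrow> nat \<Rightarrow> 'a::field_char_0"
  shows "pfaffian (2*m) (\<lambda>i j. \<Sum>a\<in>{1..2*m}. \<Sum>b\<in>{1..2*m}. M i a * A a b * M j b)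
       = detM M {1..2*m} * pfaffian (2*m) A"
  unfolding pfaffian_def using numer_transform[where m=m and M=M and A=A] by simp

lemma pf_congr:
  assumes "\<And>i j. i \<in> {1..d} \<Longrightarrow> j \<in> {1..d} \<Longrightarrow> A i j = B i j"
  shows "pfaffian d A = pfaffian d B"
  unfolding pfaffian_def
proof (intro arg_cong2[where f="(/)"] refl sum.cong arg_cong2[where f="(*)"] prod.cong)
  fix s i assume s: "s \<in> {s. s permutes {1..d}}" and i: "i \<in> {1..d div 2}"
  have i1: "2*i-1 \<in> {1..d}" and i2: "2*i \<in> {1..d}" using i by auto
  have sp: "s permutes {1..d}" using s by simp
  have "s (2*i-1) \<in> {1..d}" "s (2*i) \<in> {1..d}"
    using permutes_in_image[OF sp] i1 i2 by blast+
  then show "A (s (2*i-1)) (s (2*i)) = B (s (2*i-1)) (s (2*i))" by (rule assms)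
qed

lemma perm_ge_id:
  fixes s :: "nat \<Rightarrow> nat"
  assumes fin: "finite D" and s: "s permutes D" and ge: "\<And>p. p \<in> D \<Longrightarrow> p \<le> s p"
  shows "s = id"
proof -
  have eqD: "s p = p" if "p \<in> D" for p
  proof (rule ccontr)
    assume "s p \<noteq> p"
    then have "p < s p" using ge[OF that] by simp
    then have "(\<Sum>q\<in>D. q) < (\<Sum>q\<in>D. s q)"
      using that ge by (intro sum_strict_mono_ex1[OF fin]) auto
    moreover have "(\<Sum>q\<in>D. s q) = (\<Sum>q\<in>D. q)"
      using sum.reindex_bij_betw[OF permutes_imp_bij[OF s], of "\<lambda>q. q"] by simp
    ultimately show False by simp
  qed
  show ?thesis
  proof
    fix p show "s p = id p"
      using eqD permutes_not_in[OF s] by (cases "p \<in> D") auto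
  qed
qed

lemma detM_lower:
  fixes M :: "nat \<Rightarrow> nat \<Rightarrow> 'a::field_char_0"
  assumes fin: "finite D" and low: "\<And>i a. i \<in> D \<Longrightarrow> a \<in> D \<Longrightarrow> i < a \<Longrightarrow> M i a = 0"
  shows "detM M D = (\<Prod>p\<in>D. M p p)"
proof -
  have "detM M D = (\<Sum>s\<in>{id}. of_int (sign s) * (\<Prod>p\<in>D. M (s p) p))"
    unfolding detM_def
  proof (rule sum.mono_neutral_right)
    show "finite {s. s permutes D}" using fin by (rule finite_permutations)
    show "{id} \<subseteq> {s. s permutes D}" by (simp add: permutes_id)
    show "\<forall>s\<in>{s. s permutes D} - {id}. of_int (sign s) * (\<Prod>p\<in>D. M (s p) p) = 0"
    proof
      fix s assume "s \<in> {s. s permutes D} - {id}"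
      then have s: "s permutes D" and ns: "s \<noteq> id" by auto
      then obtain p where p: "p \<in> D" "s p < p" using perm_ge_id[OF fin s] by force
      then have "M (s p) p = 0" using low s by (simp add: permutes_in_image)
      then have "(\<Prod>p\<in>D. M (s p) p) = 0" using p fin by (intro prod_zero) auto
      then show "of_int (sign s) * (\<Prod>p\<in>D. M (s p) p) = 0" by simp
    qed
  qed
  then show ?thesis by simp
qed


definition Mm :: "nat \<Rightarrow> nat \<Rightarrow> nat \<Rightarrow> 'a::field_char_0" where
  "Mm n i a = (if 1 \<le> i \<and> i \<le> 2*n \<and> 1 \<le> a \<and> a \<le> i then Bm i a
     else if i = 2*n+1 \<and> a = 2*n+1 then -1 else if i = 2*n+2 \<and> a = 2*n+2 then 1 else 0)"

lemma rowsum: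
  fixes f :: "nat \<Rightarrow> 'a::field_char_0"
  assumes i: "i \<in> {1..2*n+2}"
  shows "(\<Sum>a\<in>{1..2*n+2}. Mm n i a * f a) =
     (if i \<le> 2*n then (\<Sum>a=1..i. Bm i a * f a) else if i = 2*n+1 then - f (2*n+1) else f (2*n+2))"
proof (cases "i \<le> 2*n")
  case True
  have "(\<Sum>a\<in>{1..2*n+2}. Mm n i a * f a) = (\<Sum>a\<in>{1..i}. Mm n i a * f a)"
    using True i by (intro sum.mono_neutral_right) (auto simp: Mm_def)
  also have "\<dots> = (\<Sum>a=1..i. Bm i a * f a)"
    using True i by (intro sum.cong refl) (auto simp: Mm_def)
  finally show ?thesis using True by simp
next
  case False
  show ?thesis
  proof (cases "i = 2*n+1")
    case True
    have "(\<Sum>a\<in>{1..2*n+2}. Mm n i a * f a) = (\<Sum>a\<in>{2*n+1}. Mm n i a * f a)"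
      using True i by (intro sum.mono_neutral_right) (auto simp: Mm_def)
    then show ?thesis using True by (simp add: Mm_def)
  next
    case False2: False
    then have i2: "i = 2*n+2" using False i by auto
    have "(\<Sum>a\<in>{1..2*n+2}. Mm n i a * f a) = (\<Sum>a\<in>{2*n+2}. Mm n i a * f a)"
      using i2 by (intro sum.mono_neutral_right) (auto simp: Mm_def)
    then show ?thesis using i2 by (simp add: Mm_def)
  qed
qed

lemma detM_Mm: "detM (Mm n :: nat \<Rightarrow> nat \<Rightarrow> 'a::field_char_0) {1..2*n+2} = (-1)^(n+1)"
proof -
  have "detM (Mm n :: nat \<Rightarrow> nat \<Rightarrow> 'a) {1..2*n+2} = (\<Prod>p\<in>{1..2*n+2}. Mm n p p)"
    by (rule detM_lower) (auto simp: Mm_def)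
  also have "\<dots> = (\<Prod>p\<in>{1..2*n}. Mm n p p) * Mm n (2*n+1) (2*n+1) * Mm n (2*n+2) (2*n+2)"
    by (simp add: prod.nat_ivl_Suc' mult_ac)
  also have "(\<Prod>p\<in>{1..2*n}. Mm n p p) = (\<Prod>p\<in>{1..2*n}. (-1)^(p-1) :: 'a)"
    by (intro prod.cong refl) (auto simp: Mm_def Bm_def)
  also have "\<dots> = (-1)^n"
  proof -
    have "(\<Prod>p\<in>{1..2*m}. (-1)^(p-1) :: 'a) = (-1)^m" for m
    proof (induction m)
      case 0 then show ?case by simp
    next
      case (Suc m)
      have "(\<Prod>p\<in>{1..2*Suc m}. (-1)^(p-1) :: 'a) = (-1)^(Suc (2*m)) * ((-1)^(2*m) * (\<Prod>p\<in>{1..2*m}. (-1)^(p-1)))"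
        by (simp add: prod.nat_ivl_Suc')
      then show ?case using Suc by simp
    qed
    then show ?thesis .
  qed
  also have "Mm n (2*n+1) (2*n+1) = (-1::'a)" by (simp add: Mm_def)
  also have "Mm n (2*n+2) (2*n+2) = (1::'a)" by (simp add: Mm_def)
  finally show ?thesis by simp
qed


context
  fixes n :: nat and x :: "'a::field_char_0"
begin

definition "xp = - (2*of_nat n + 1) - x"

lemma BP: "i \<ge> 1 \<Longrightarrow> (\<Sum>a=1..i. Bm i a * ((2*x + 2*of_nat n + 1) gchoose a)) = - ((2*xp + 2*of_nat n + 1) gchoose i)"
proof -
  assume i: "i \<ge> 1"
  have eq: "2*xp + 2*of_nat n + 1 = -(2*x + 2*of_nat n + 1)" unfolding xp_def by (simp add: algebra_simps)
  show ?thesis unfolding eq BV2[OF i] ..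
qed

lemma BQ: "i \<ge> 1 \<Longrightarrow> (\<Sum>a=1..i. Bm i a * (((x + of_nat n) gchoose a) + ((x + of_nat n + 1) gchoose a)))
   = - (((xp + of_nat n) gchoose i) + ((xp + of_nat n + 1) gchoose i))"
proof -
  assume i: "i \<ge> 1"
  have eq1: "xp + of_nat n = -(x + of_nat n + 1)" unfolding xp_def by (simp add: algebra_simps)
  have eq2: "xp + of_nat n + 1 = -(x + of_nat n)" unfolding xp_def by (simp add: algebra_simps)
  show ?thesis unfolding eq1 eq2 distrib_left sum.distrib BV2[OF i] by simp
qed

lemma BN: "i \<ge> 1 \<Longrightarrow> (\<Sum>a=1..i. Bm i a * Ncol n x a) = - Ncol n xp i"
proof -
  assume i: "i \<ge> 1"
  have eq0: "2*of_nat n + 2*xp + 1 = -(2*of_nat n + 2*x + 1)" unfolding xp_def by (simp add: algebra_simps)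
  have eq1: "of_nat n + xp = -(of_nat n + x + 1)" unfolding xp_def by (simp add: algebra_simps)
  have eq2: "of_nat n + xp + 1 = -(of_nat n + x)" unfolding xp_def by (simp add: algebra_simps)
  show ?thesis unfolding Ncol_def eq0 eq1 eq2 right_diff_distrib sum_subtractf BV2[OF i] by simp
qed

lemma BL: "i \<ge> 1 \<Longrightarrow> (\<Sum>a=1..i. Bm i a * ((x + of_nat n) gchoose (a-1))) = (xp + of_nat n) gchoose (i-1)"
proof -
  assume i: "i \<ge> 1"
  have eq: "xp + of_nat n = -1 - (x + of_nat n)" unfolding xp_def by (simp add: algebra_simps)
  show ?thesis unfolding eq BV1[OF i] ..
qed

end

lemma sum_split3:
  fixes f g p q :: "nat \<Rightarrow> 'a::comm_ring_1" and r :: "nat \<Rightarrow> nat \<Rightarrow> 'a"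
  shows "(\<Sum>a\<in>A. f a * (\<Sum>b\<in>B. g b * (r a b + p a * q b - p b * q a)))
       = (\<Sum>a\<in>A. \<Sum>b\<in>B. f a * g b * r a b) + (\<Sum>a\<in>A. f a * p a) * (\<Sum>b\<in>B. g b * q b)
         - (\<Sum>b\<in>B. g b * p b) * (\<Sum>a\<in>A. f a * q a)"
  by (simp add: sum_product sum_subtractf sum.distrib sum_distrib_left right_diff_distrib distrib_left
      sum.swap[of _ A B] algebra_simps)

lemma block:
  fixes x :: "'a::field_char_0"
  assumes i: "1 \<le> i" "i \<le> 2*n" and j: "1 \<le> j" "j \<le> 2*n"
  shows "(\<Sum>a=1..i. Bm i a * (\<Sum>b=1..j. Bm j b * Nmat n x a b)) = Nmat n (xp n x) i j"
proof -
  define P where "P a = (2*x + 2*of_nat n + 1) gchoose a" for a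
  define Q where "Q b = ((x + of_nat n) gchoose b) + ((x + of_nat n + 1) gchoose b)" for b
  define w where "w = 2*x + 2*of_nat n + 2"
  have "(\<Sum>a=1..i. Bm i a * (\<Sum>b=1..j. Bm j b * Nmat n x a b))
      = (\<Sum>a=1..i. Bm i a * (\<Sum>b=1..j. Bm j b * (Rw a b w + P a * Q b - P b * Q a)))"
    using i j unfolding Nmat_def Rpol_Rw Tpol_def P_def Q_def w_def
    by (intro sum.cong refl arg_cong2[where f="(*)"]) auto
  also have "\<dots> = (\<Sum>a=1..i. \<Sum>b=1..j. Bm i a * Bm j b * Rw a b w)
       + (\<Sum>a=1..i. Bm i a * P a) * (\<Sum>b=1..j. Bm j b * Q b) - (\<Sum>b=1..j. Bm j b * P b) * (\<Sum>a=1..i. Bm i a * Q a)"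
    by (rule sum_split3)
  also have "\<dots> = Rw i j (2 - w) + ((2*xp n x + 2*of_nat n + 1) gchoose i) * (((xp n x + of_nat n) gchoose j) + ((xp n x + of_nat n + 1) gchoose j))
      - ((2*xp n x + 2*of_nat n + 1) gchoose j) * (((xp n x + of_nat n) gchoose i) + ((xp n x + of_nat n + 1) gchoose i))"
    unfolding R_inv[OF i(1) j(1)] P_def Q_def BP[OF i(1)] BP[OF j(1)] BQ[OF i(1)] BQ[OF j(1)] by (simp add: algebra_simps)
  also have "2 - w = 2 * xp n x + 2 * of_nat n + 2" unfolding w_def xp_def by (simp add: algebra_simps)
  finally show ?thesis using i j unfolding Nmat_def Rpol_Rw Tpol_def by simp
qed


lemma entry:
  fixes x :: "'a::field_char_0"
  assumes i: "i \<in> {1..2*n+2}" and j: "j \<in> {1..2*n+2}"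
  shows "Nmat n (xp n x) i j = (\<Sum>a\<in>{1..2*n+2}. \<Sum>b\<in>{1..2*n+2}. Mm n i a * Nmat n x a b * Mm n j b)"
proof -
  define RJ where "RJ a = (if j \<le> 2*n then (\<Sum>b=1..j. Bm j b * Nmat n x a b)
     else if j = 2*n+1 then - Nmat n x a (2*n+1) else Nmat n x a (2*n+2))" for a
  have "(\<Sum>a\<in>{1..2*n+2}. \<Sum>b\<in>{1..2*n+2}. Mm n i a * Nmat n x a b * Mm n j b)
      = (\<Sum>a\<in>{1..2*n+2}. Mm n i a * (\<Sum>b\<in>{1..2*n+2}. Mm n j b * Nmat n x a b))"
    unfolding sum_distrib_left by (simp only: mult_ac)
  also have "\<dots> = (\<Sum>a\<in>{1..2*n+2}. Mm n i a * RJ a)"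
    by (intro sum.cong refl arg_cong2[where f="(*)"]) (unfold RJ_def, rule rowsum[OF j])
  also have "\<dots> = (if i \<le> 2*n then (\<Sum>a=1..i. Bm i a * RJ a) else if i = 2*n+1 then - RJ (2*n+1) else RJ (2*n+2))"
    by (rule rowsum[OF i])
  finally have eq: "(\<Sum>a\<in>{1..2*n+2}. \<Sum>b\<in>{1..2*n+2}. Mm n i a * Nmat n x a b * Mm n j b)
     = (if i \<le> 2*n then (\<Sum>a=1..i. Bm i a * RJ a) else if i = 2*n+1 then - RJ (2*n+1) else RJ (2*n+2))" .
  have i1: "i \<ge> 1" and j1: "j \<ge> 1" using i j by auto
  consider "i \<le> 2*n" | "i = 2*n+1" | "i = 2*n+2" using i by force
  then show ?thesis
  proof cases
    case 1
    consider "j \<le> 2*n" | "j = 2*n+1" | "j = 2*n+2" using j by force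
    then show ?thesis
    proof cases
      case j1': 1
      then show ?thesis unfolding eq RJ_def using 1 block[OF i1 1 j1 j1', of x] by simp
    next
      case 2
      have "(\<Sum>a=1..i. Bm i a * RJ a) = - (\<Sum>a=1..i. Bm i a * Ncol n x a)"
        unfolding RJ_def using 1 2 by (simp add: sum_negf[symmetric] Nmat_def)
      also have "\<dots> = Ncol n (xp n x) i" using BN[where n=n and x=x, OF i1] by simp
      finally show ?thesis unfolding eq using 1 2 i1 by (simp add: Nmat_def)
    next
      case 3
      have "(\<Sum>a=1..i. Bm i a * RJ a) = (\<Sum>a=1..i. Bm i a * ((x + of_nat n) gchoose (a-1)))"
        unfolding RJ_def using 1 3 by (intro sum.cong refl) (simp add: Nmat_def)
      also have "\<dots> = (xp n x + of_nat n) gchoose (i-1)" using BL[where n=n and x=x, OF i1] by simp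
      finally show ?thesis unfolding eq using 1 3 i1 by (simp add: Nmat_def)
    qed
  next
    case 2
    consider "j \<le> 2*n" | "j = 2*n+1" | "j = 2*n+2" using j by force
    then show ?thesis
    proof cases
      case 1
      have "RJ (2*n+1) = - (\<Sum>b=1..j. Bm j b * Ncol n x b)"
        unfolding RJ_def using 1 by (simp add: sum_negf[symmetric] Nmat_def)
      also have "\<dots> = Ncol n (xp n x) j" using BN[where n=n and x=x, OF j1] by simp
      finally show ?thesis unfolding eq using 1 2 j1 by (simp add: Nmat_def)
    next
      case jc2: 2
      then show ?thesis unfolding eq RJ_def using 2 by (simp add: Nmat_def)
    next
      case 3
      then show ?thesis unfolding eq RJ_def using 2 by (simp add: Nmat_def)
    qed
  next
    case 3
    consider "j \<le> 2*n" | "j = 2*n+1" | "j = 2*n+2" using j by force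
    then show ?thesis
    proof cases
      case 1
      have "RJ (2*n+2) = - (\<Sum>b=1..j. Bm j b * ((x + of_nat n) gchoose (b-1)))"
        unfolding RJ_def using 1 by (simp add: sum_negf[symmetric] Nmat_def)
      also have "\<dots> = - ((xp n x + of_nat n) gchoose (j-1))" using BL[where n=n and x=x, OF j1] by simp
      finally show ?thesis unfolding eq using 1 3 j1 by (simp add: Nmat_def)
    next
      case 2
      then show ?thesis unfolding eq RJ_def using 3 by (simp add: Nmat_def)
    next
      case jc3: 3
      then show ?thesis unfolding eq RJ_def using 3 by (simp add: Nmat_def)
    qed
  qed
qed

theorem mainTheorem11:
  fixes n :: nat and x :: "'a::field_char_0"
  assumes "n \<ge> 1"
  shows "pfaffian (2*n+2) (Nmat n x)
         = (-1) ^ (n+1) * pfaffian (2*n+2) (Nmat n (- (2*of_nat n + 1) - x))"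
proof -
  have d: "2*n+2 = 2*(n+1)" by simp
  have "pfaffian (2*n+2) (Nmat n (xp n x))
      = pfaffian (2*n+2) (\<lambda>i j. \<Sum>a\<in>{1..2*n+2}. \<Sum>b\<in>{1..2*n+2}. Mm n i a * Nmat n x a b * Mm n j b)"
    by (rule pf_congr) (rule entry)
  also have "\<dots> = detM (Mm n) {1..2*n+2} * pfaffian (2*n+2) (Nmat n x)"
    unfolding d by (rule pf_transform)
  also have "\<dots> = (-1)^(n+1) * pfaffian (2*n+2) (Nmat n x)" by (simp only: detM_Mm)
  finally have "pfaffian (2*n+2) (Nmat n (xp n x)) = (-1)^(n+1) * pfaffian (2*n+2) (Nmat n x)" .
  then have "(-1)^(n+1) * pfaffian (2*n+2) (Nmat n (xp n x)) = ((-1)^(n+1) * (-1)^(n+1)) * pfaffian (2*n+2) (Nmat n x)"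
    by (simp add: mult.assoc)
  also have "(-1)^(n+1) * (-1)^(n+1) = (1::'a)" by (simp flip: power_add)
  finally show ?thesis unfolding xp_def by simp
qed

end
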